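(* Let $i\ge 2$ and let $c_0,\dots,c_{i-1}$ be the vertices of a cycle (in this cyclic order), each with a positive weight $w(c_j)$, and let $W=\sum_j w(c_j)$. Run the following procedure (BalanceInCycle): initialize $b_{OPT}\gets 0$, a queue $Q_1$ empty and a queue $Q_2$ containing $c_0,c_1,\dots,c_{i-1}$ in this order (head $c_0$). Repeat the following iteration until $c_0$ becomes the head of $Q_1$ for the second time: update $b_{OPT}\gets\max\{b_{OPT},\min(w(Q_1),w(Q_2))\}$; then, if $w(Q_1)>w(Q_2)$, dequeue the head of $Q_1$ and append it to the tail of $Q_2$, otherwise dequeue the head of $Q_2$ and append it to the tail of $Q_1$. Then the procedure finds the most balanced cut of the cycle, i.e. at termination $b_{OPT}$ equals $\max_J \min\{w(J),W-w(J)\}$, where $J$ ranges over all non-empty proper subsets of $\{c_0,\dots,c_{i-1}\}$ that are contiguous in the cyclic order (equivalently, over all cuts of the cycle consisting of two distinct cycle edges) and $w(J)=\sum_{c\in J}w(c)$.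
   Context: $w(Q)$ denotes the sum of the weights of the elements currently in queue $Q$. Queues are FIFO. In the paper's application, the cycle is a cycle of the cactus representation of all minimum cuts of a graph $G$ with $n$ vertices (so $W=n$), $w(c_j)$ is the number of vertices of $G$ represented in the sub-cactus hanging off $c_j$, each pair of cycle edges gives a minimum cut of $G$, and the balance of a cut is the number of vertices of $G$ on its lighter side. *)

theory Defs
  imports Complex_Main
begin

text \<open>Cycle vertices c_0..c_(i-1) are represented by indices 0..i-1; queues are lists
  (head = first element). w(Q) is the total weight of a queue.\<close>

definition qweight :: "(nat \<Rightarrow> real) \<Rightarrow> nat list \<Rightarrow> real" where
  "qweight w Q = sum_list (map w Q)"

definition bic_step :: "(nat \<Rightarrow> real) \<Rightarrow> nat list \<times> nat list \<times> real \<Rightarrow> nat list \<times> nat list \<times> real" where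
  "bic_step w st = (case st of (Q1, Q2, b) \<Rightarrow>
     (let b' = max b (min (qweight w Q1) (qweight w Q2)) in
      if qweight w Q1 > qweight w Q2 then (tl Q1, Q2 @ [hd Q1], b')
      else (Q1 @ [hd Q2], tl Q2, b')))"

definition bic_state :: "(nat \<Rightarrow> real) \<Rightarrow> nat \<Rightarrow> nat \<Rightarrow> nat list \<times> nat list \<times> real" where
  "bic_state w i k = (bic_step w ^^ k) ([], [0..<i], 0)"

definition head_is_c0 :: "nat list \<Rightarrow> bool" where
  "head_is_c0 Q \<longleftrightarrow> Q \<noteq> [] \<and> hd Q = 0"

definition bic_becomes :: "(nat \<Rightarrow> real) \<Rightarrow> nat \<Rightarrow> nat \<Rightarrow> bool" where
  "bic_becomes w i t \<longleftrightarrow> 0 < t \<and> head_is_c0 (fst (bic_state w i t))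
      \<and> \<not> head_is_c0 (fst (bic_state w i (t - 1)))"

definition cycle_arcs :: "nat \<Rightarrow> nat set set" where
  "cycle_arcs i = {{(s + j) mod i | j. j < l} | s l. s < i \<and> 0 < l \<and> l < i}"

definition best_balance :: "(nat \<Rightarrow> real) \<Rightarrow> nat \<Rightarrow> real" where
  "best_balance w i = Max ((\<lambda>J. min (sum w J) (sum w {..<i} - sum w J)) ` cycle_arcs i)"

end

theory Submission
  imports Defs
begin

locale bicl =
  fixes w :: "nat \<Rightarrow> real" and i :: nat
  assumes i2: "i \<ge> 2" and pos: "\<And>j. j < i \<Longrightarrow> w j > 0"
begin

definition F :: "nat \<Rightarrow> nat \<Rightarrow> real" where
  "F a b = (\<Sum>j\<in>{a..<b}. w (j mod i))"

lemma g_pos: "w (j mod i) > 0"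
  using pos i2 by simp

lemma F_nonneg: "F a b \<ge> 0"
  unfolding F_def by (intro sum_nonneg) (simp add: less_imp_le g_pos)

lemma F_split: "a \<le> b \<Longrightarrow> b \<le> c \<Longrightarrow> F a c = F a b + F b c"
  unfolding F_def by (simp add: sum.atLeastLessThan_concat)

lemma F_pos: "a < b \<Longrightarrow> F a b > 0"
  unfolding F_def by (intro sum_pos) (auto simp: g_pos)

lemma F_empty[simp]: "F a a = 0"
  unfolding F_def by simp

lemma F_mono: "a' \<le> a \<Longrightarrow> a \<le> b \<Longrightarrow> b \<le> b' \<Longrightarrow> F a b \<le> F a' b'"
  using F_split[of a' a b'] F_split[of a b b'] F_nonneg[of a' a] F_nonneg[of b b'] by simp

lemma F_Suc: "F a (Suc b) = F a b + w (b mod i)" if "a \<le> b"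
  using that unfolding F_def by simp

lemma F_period: "F a (a + i) = sum w {..<i}"
proof (induction a)
  case 0
  then show ?case unfolding F_def by (intro sum.cong) auto
next
  case (Suc a)
  have "F a (Suc a + i) = F a (Suc a) + F (Suc a) (Suc a + i)"
    by (rule F_split) auto
  moreover have "F a (Suc a + i) = F a (a + i) + w ((a + i) mod i)"
    using F_Suc[of a "a+i"] by simp
  moreover have "F a (Suc a) = w (a mod i)" unfolding F_def by simp
  ultimately show ?case using Suc by simp
qed

definition astep :: "nat \<times> nat \<times> real \<Rightarrow> nat \<times> nat \<times> real" where
  "astep st = (case st of (r, m, b) \<Rightarrow>
     (let x = F r (r + m); y = F (r + m) (r + i); b' = max b (min x y) in
      if y < x then (r + 1, m - 1, b') else (r, m + 1, b')))"

definition ast :: "nat \<Rightarrow> nat \<times> nat \<times> real" where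
  "ast t = (astep ^^ t) (0, 0, 0)"

abbreviation "R t \<equiv> fst (ast t)"
abbreviation "M t \<equiv> fst (snd (ast t))"
abbreviation "B t \<equiv> snd (snd (ast t))"

definition val :: "nat \<Rightarrow> real" where
  "val t = min (F (R t) (R t + M t)) (F (R t + M t) (R t + i))"

lemma ast_0: "R 0 = 0" "M 0 = 0" "B 0 = 0"
  unfolding ast_def by auto

lemma ast_Suc: "ast (Suc t) = astep (ast t)"
  unfolding ast_def by simp

lemma step_B: "B (Suc t) = max (B t) (val t)"
  unfolding ast_Suc astep_def val_def by (auto simp: Let_def split: prod.splits)

lemma M_le: "M t \<le> i"
proof (induction t)
  case 0 then show ?case using ast_0 by simp
next
  case (Suc t)
  obtain r m b where st: "ast t = (r, m, b)" by (cases "ast t") auto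
  show ?case
  proof (cases "F (r + m) (r + i) < F r (r + m)")
    case True
    then show ?thesis using Suc st unfolding ast_Suc astep_def by (simp add: Let_def)
  next
    case False
    have "m \<noteq> i" proof
      assume "m = i"
      then show False using False F_pos[of r "r+m"] i2 by simp
    qed
    then show ?thesis using False Suc st unfolding ast_Suc astep_def by (simp add: Let_def)
  qed
qed

lemma step_cases:
  "(F (R t + M t) (R t + i) < F (R t) (R t + M t) \<and> 0 < M t \<and> R (Suc t) = R t + 1 \<and> M (Suc t) = M t - 1)
   \<or> (\<not> F (R t + M t) (R t + i) < F (R t) (R t + M t) \<and> M t < i \<and> R (Suc t) = R t \<and> M (Suc t) = M t + 1)"
proof -
  obtain r m b where st: "ast t = (r, m, b)" by (cases "ast t") auto
  have mi: "m \<le> i" using M_le[of t] st by simp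
  show ?thesis
  proof (cases "F (r + m) (r + i) < F r (r + m)")
    case True
    have "m \<noteq> 0" proof
      assume "m = 0" then show False using True F_nonneg[of r "r+i"] by simp
    qed
    then show ?thesis using True st unfolding ast_Suc astep_def by (simp add: Let_def)
  next
    case False
    have "m \<noteq> i" proof
      assume "m = i"
      then show False using False F_pos[of r "r+m"] i2 by simp
    qed
    then show ?thesis using False mi st unfolding ast_Suc astep_def by (simp add: Let_def)
  qed
qed

definition rep :: "nat \<times> nat \<times> real \<Rightarrow> nat list \<times> nat list \<times> real" where
  "rep st = (case st of (r, m, b) \<Rightarrow>
     (map (\<lambda>j. j mod i) [r..<r+m], map (\<lambda>j. j mod i) [r+m..<r+i], b))"

lemma qw: "qweight w (map (\<lambda>j. j mod i) [a..<c]) = F a c"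
  unfolding qweight_def F_def by (simp add: interv_sum_list_conv_sum_set_nat)

lemma bic_rep: "bic_state w i t = rep (ast t)"
proof (induction t)
  case 0
  have "map (\<lambda>j. j mod i) [0..<i] = [0..<i]" by (intro map_idI) simp
  then show ?case unfolding bic_state_def ast_def rep_def by simp
next
  case (Suc t)
  obtain r m b where st: "ast t = (r, m, b)" by (cases "ast t") auto
  have IH: "bic_state w i t = (map (\<lambda>j. j mod i) [r..<r+m], map (\<lambda>j. j mod i) [r+m..<r+i], b)"
    using Suc st unfolding rep_def by simp
  have bs: "bic_state w i (Suc t) = bic_step w (bic_state w i t)"
    unfolding bic_state_def by simp
  have mi: "m \<le> i" using M_le[of t] st by simp
  from step_cases[of t] show ?case
  proof
    assume h: "F (R t + M t) (R t + i) < F (R t) (R t + M t) \<and> 0 < M t \<and> R (Suc t) = R t + 1 \<and> M (Suc t) = M t - 1"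
    then have h': "F (r + m) (r + i) < F r (r + m)" "0 < m" using st by auto
    have e1: "[r..<r+m] = r # [Suc r..<r+m]" using h' by (simp add: upt_conv_Cons)
    have e2: "[r+m..<r+i] @ [r+i] = [r+m..<Suc (r+i)]" using mi by simp
    have e3: "(r + i) mod i = r mod i" by simp
    have "bic_step w (bic_state w i t) =
       (map (\<lambda>j. j mod i) [Suc r..<r+m], map (\<lambda>j. j mod i) [r+m..<Suc (r+i)], max b (min (F r (r+m)) (F (r+m) (r+i))))"
    proof -
      have "bic_step w (bic_state w i t) = (tl (map (\<lambda>j. j mod i) [r..<r+m]), map (\<lambda>j. j mod i) [r+m..<r+i] @ [hd (map (\<lambda>j. j mod i) [r..<r+m])], max b (min (F r (r+m)) (F (r+m) (r+i))))"
        unfolding IH bic_step_def using h' by (simp add: Let_def qw)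
      also have "\<dots> = (map (\<lambda>j. j mod i) [Suc r..<r+m], map (\<lambda>j. j mod i) [r+m..<Suc (r+i)], max b (min (F r (r+m)) (F (r+m) (r+i))))"
        using e1 e3 mi by simp
      finally show ?thesis .
    qed
    moreover have "ast (Suc t) = (r + 1, m - 1, max b (min (F r (r+m)) (F (r+m) (r+i))))"
      unfolding ast_Suc st astep_def using h' by (simp add: Let_def)
    ultimately show ?thesis using bs h' mi unfolding rep_def by (simp del: upt_Suc)
  next
    assume h: "\<not> F (R t + M t) (R t + i) < F (R t) (R t + M t) \<and> M t < i \<and> R (Suc t) = R t \<and> M (Suc t) = M t + 1"
    then have h': "\<not> F (r + m) (r + i) < F r (r + m)" "m < i" using st by auto
    have e1: "[r+m..<r+i] = (r+m) # [Suc (r+m)..<r+i]" using h' by (simp add: upt_conv_Cons)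
    have "bic_step w (bic_state w i t) =
       (map (\<lambda>j. j mod i) [r..<Suc (r+m)], map (\<lambda>j. j mod i) [Suc (r+m)..<r+i], max b (min (F r (r+m)) (F (r+m) (r+i))))"
    proof -
      have "bic_step w (bic_state w i t) = (map (\<lambda>j. j mod i) [r..<r+m] @ [hd (map (\<lambda>j. j mod i) [r+m..<r+i])], tl (map (\<lambda>j. j mod i) [r+m..<r+i]), max b (min (F r (r+m)) (F (r+m) (r+i))))"
        unfolding IH bic_step_def using h' by (simp add: Let_def qw)
      also have "\<dots> = (map (\<lambda>j. j mod i) [r..<Suc (r+m)], map (\<lambda>j. j mod i) [Suc (r+m)..<r+i], max b (min (F r (r+m)) (F (r+m) (r+i))))"
        using e1 by simp
      finally show ?thesis .
    qed
    moreover have "ast (Suc t) = (r, m + 1, max b (min (F r (r+m)) (F (r+m) (r+i))))"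
      unfolding ast_Suc st astep_def using h' by (simp add: Let_def)
    ultimately show ?thesis using bs h' mi unfolding rep_def by (simp del: upt_Suc)
  qed
qed


abbreviation "E t \<equiv> R t + M t"

lemma R_step: "R t \<le> R (Suc t) \<and> R (Suc t) \<le> Suc (R t)"
  using step_cases[of t] by auto

lemma E_step: "E t \<le> E (Suc t) \<and> E (Suc t) \<le> Suc (E t)"
  using step_cases[of t] by auto

lemma R_mono: "t \<le> t' \<Longrightarrow> R t \<le> R t'"
  by (rule lift_Suc_mono_le[of R]) (use R_step in auto)

lemma E_mono: "t \<le> t' \<Longrightarrow> E t \<le> E t'"
  by (rule lift_Suc_mono_le[of E]) (use E_step in auto)

lemma const_R: "R (t + d) = R t \<Longrightarrow> M (t + d) = M t + d"
proof (induction d)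
  case 0 then show ?case by simp
next
  case (Suc d)
  have "R t \<le> R (t + d)" "R (t + d) \<le> R (t + Suc d)" using R_mono by auto
  then have "R (t + d) = R t" using Suc by simp
  then have "M (t + d) = M t + d" using Suc by simp
  moreover have "R (Suc (t + d)) = R (t + d)" using Suc \<open>R (t + d) = R t\<close> by simp
  ultimately show ?case using step_cases[of "t + d"] by auto
qed

lemma R_inc: "R t < R (t + Suc i)"
proof (rule ccontr)
  assume "\<not> R t < R (t + Suc i)"
  then have "R (t + Suc i) = R t" using R_mono[of t "t + Suc i"] by simp
  then have "M (t + Suc i) = M t + Suc i" by (rule const_R)
  then show False using M_le[of "t + Suc i"] by simp
qed

lemma R_big: "n \<le> R (n * Suc i)"
proof (induction n)
  case 0 then show ?case by simp
next
  case (Suc n)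
  have "R (n * Suc i) < R (n * Suc i + Suc i)" by (rule R_inc)
  moreover have "Suc n * Suc i = n * Suc i + Suc i" by simp
  ultimately show ?case using Suc by (metis Suc_le_eq le_less_trans)
qed

lemma first_R: "v \<le> R t \<Longrightarrow> \<exists>t'\<le>t. R t' = v \<and> (\<forall>u<t'. R u < v)"
proof (induction t)
  case 0 then show ?case using ast_0 by auto
next
  case (Suc t)
  show ?case
  proof (cases "v \<le> R t")
    case True then show ?thesis using Suc by (meson le_SucI)
  next
    case False
    then have "v = R (Suc t)" using Suc R_step[of t] by simp
    moreover have "\<forall>u<Suc t. R u < v" using False R_mono by (meson less_Suc_eq_le order_le_less_trans not_le)
    ultimately show ?thesis by blast
  qed
qed

lemma last_E: "v < E t \<Longrightarrow> \<exists>t'<t. E t' = v \<and> E (Suc t') = Suc v"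
proof (induction t)
  case 0 then show ?case using ast_0 by auto
next
  case (Suc t)
  show ?case
  proof (cases "v < E t")
    case True then show ?thesis using Suc by (meson less_SucI)
  next
    case False
    then show ?thesis using Suc.prems E_step[of t] by (intro exI[of _ t]) auto
  qed
qed

lemma exists_end: "\<exists>t. R t = i \<and> 0 < M t"
proof -
  have "Suc i \<le> R (Suc i * Suc i)" by (rule R_big)
  then obtain t' where t': "R t' = Suc i" "\<forall>u<t'. R u < Suc i" using first_R by blast
  have "t' \<noteq> 0"
  proof
    assume "t' = 0" then show False using t'(1) ast_0(1) by simp
  qed
  then obtain u where u: "t' = Suc u" by (cases t') auto
  have "R u < Suc i" using t' u by simp
  moreover have "R u \<ge> i" using R_step[of u] t' u by simp
  ultimately have "R u = i" by simp
  then have "0 < M u" using step_cases[of u] t' u by auto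
  then show ?thesis using \<open>R u = i\<close> by blast
qed

definition k :: nat where "k = (LEAST t. R t = i \<and> 0 < M t)"

lemma k_props: "R k = i" "0 < M k"
  using LeastI_ex[OF exists_end] unfolding k_def by auto

lemma before_k: "t < k \<Longrightarrow> \<not> (R t = i \<and> 0 < M t)"
  unfolding k_def by (rule not_less_Least)

lemma R_le_k: "t \<le> k \<Longrightarrow> R t \<le> i"
proof (induction t)
  case 0 then show ?case using ast_0 by simp
next
  case (Suc t)
  then have "R t \<le> i" by simp
  show ?case
  proof (cases "R t = i")
    case True
    then have "M t = 0" using before_k[of t] Suc by simp
    then have "R (Suc t) = R t" using step_cases[of t] by auto
    then show ?thesis using True by simp
  next
    case False
    then show ?thesis using \<open>R t \<le> i\<close> R_step[of t] by simp
  qed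
qed

lemma ast_1: "R 1 = 0" "M 1 = 1"
proof -
  have "F 0 i > 0" using F_pos i2 by simp
  then show "R 1 = 0" "M 1 = 1" using ast_Suc[of 0] ast_0 unfolding astep_def
    by (auto simp: Let_def ast_def)
qed

lemma k_pos: "1 < k"
proof -
  have "k \<noteq> 0"
  proof
    assume "k = 0" then show False using k_props(1) ast_0(1) i2 by simp
  qed
  moreover have "k \<noteq> 1"
  proof
    assume "k = 1" then show False using k_props(1) ast_1(1) i2 by simp
  qed
  ultimately show ?thesis by simp
qed

lemma R0_M: "1 \<le> t \<Longrightarrow> R t = 0 \<Longrightarrow> M t = t"
  using const_R[of 1 "t - 1"] ast_1 by simp

lemma head_iff: "head_is_c0 (fst (bic_state w i t)) \<longleftrightarrow> 0 < M t \<and> R t mod i = 0"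
proof -
  obtain r m b where st: "ast t = (r, m, b)" by (cases "ast t") auto
  show ?thesis
  proof (cases "m = 0")
    case True then show ?thesis unfolding bic_rep rep_def head_is_c0_def st by simp
  next
    case False
    then have "[r..<r+m] = r # [Suc r..<r+m]" by (simp add: upt_conv_Cons)
    then show ?thesis unfolding bic_rep rep_def head_is_c0_def st using False by simp
  qed
qed

lemma becomes_iff: "t \<le> k \<Longrightarrow> bic_becomes w i t \<longleftrightarrow> t = 1 \<or> t = k"
proof
  assume tk: "t \<le> k" and b: "bic_becomes w i t"
  then have t0: "0 < t" and h: "0 < M t" "R t mod i = 0" and nh: "\<not> (0 < M (t - 1) \<and> R (t - 1) mod i = 0)"
    unfolding bic_becomes_def head_iff by auto
  have "R t \<le> i" using R_le_k tk by simp
  then have "R t = 0 \<or> R t = i" using h by (metis le_neq_implies_less mod_less)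
  then show "t = 1 \<or> t = k"
  proof
    assume r0: "R t = 0"
    show ?thesis
    proof (rule ccontr)
      assume "\<not> (t = 1 \<or> t = k)"
      then have "2 \<le> t" using t0 by simp
      have "R (t - 1) = 0" using R_mono[of "t - 1" t] r0 by simp
      then have "M (t - 1) = t - 1" using R0_M[of "t - 1"] \<open>2 \<le> t\<close> by simp
      then show False using nh \<open>R (t - 1) = 0\<close> \<open>2 \<le> t\<close> by simp
    qed
  next
    assume "R t = i"
    then have "\<not> t < k" using before_k h by blast
    then show ?thesis using tk by simp
  qed
next
  assume tk: "t \<le> k" and tt: "t = 1 \<or> t = k"
  from tt show "bic_becomes w i t"
  proof
    assume "t = 1" then show ?thesis
      unfolding bic_becomes_def head_iff using ast_1 ast_0 by simp
  next
    assume tk': "t = k"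
    have "\<not> (0 < M (k - 1) \<and> R (k - 1) mod i = 0)"
    proof
      assume a: "0 < M (k - 1) \<and> R (k - 1) mod i = 0"
      have "R (k - 1) \<le> i" using R_le_k by simp
      moreover have "R (k - 1) \<noteq> i" using before_k[of "k - 1"] a k_pos by simp
      moreover have "i \<le> Suc (R (k - 1))" using R_step[of "k - 1"] k_pos k_props by simp
      ultimately have "R (k - 1) = i - 1" by simp
      then show False using a i2 by simp
    qed
    then show ?thesis unfolding bic_becomes_def head_iff tk' using k_props k_pos by simp
  qed
qed

lemma card_becomes: "card {t. t \<le> k \<and> bic_becomes w i t} = 2"
proof -
  have "{t. t \<le> k \<and> bic_becomes w i t} = {1, k}"
    using becomes_iff k_pos by auto
  then show ?thesis using k_pos by simp
qed


lemma B_mono: "t \<le> t' \<Longrightarrow> B t \<le> B t'"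
  by (rule lift_Suc_mono_le[of B]) (auto simp: step_B)

lemma val_le_B: "t < t' \<Longrightarrow> val t \<le> B t'"
  using B_mono[of "Suc t" t'] step_B[of t] by simp

lemma arc_eq: "{(s + j) mod i | j. j < l} = (\<lambda>j. (s + j) mod i) ` {..<l}"
  by auto

lemma arc_inj: "l \<le> i \<Longrightarrow> inj_on (\<lambda>j. (s + j) mod i) {..<l}"
proof (rule inj_onI)
  fix x y assume l: "l \<le> i" and x: "x \<in> {..<l}" and y: "y \<in> {..<l}"
    and e: "(s + x) mod i = (s + y) mod i"
  then have "x mod i = y mod i"
    using nat_mod_eq_iff[where x="s+x" and y="s+y" and n=i] nat_mod_eq_iff[where x=x and y=y and n=i] by auto
  moreover have "x < i" "y < i" using x y l by auto
  ultimately show "x = y" by simp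
qed

lemma arc_sum: "l \<le> i \<Longrightarrow> sum w {(s + j) mod i | j. j < l} = F s (s + l)"
proof -
  assume l: "l \<le> i"
  have "sum w {(s + j) mod i | j. j < l} = (\<Sum>j<l. w ((s + j) mod i))"
    unfolding arc_eq using sum.reindex[OF arc_inj[OF l], of w] by simp
  also have "\<dots> = F s (s + l)"
  proof (induction l)
    case 0 then show ?case by simp
  next
    case (Suc l) then show ?case using F_Suc[of s "s + l"] by simp
  qed
  finally show ?thesis .
qed

lemma arc_mod: "{(s + j) mod i | j. j < l} = {(s mod i + j) mod i | j. j < l}"
  by (simp add: mod_add_left_eq)

lemma compl: "s \<le> b \<Longrightarrow> b \<le> s + i \<Longrightarrow> sum w {..<i} - F s b = F b (s + i)"
  using F_period[of s] F_split[of s b "s + i"] by simp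

abbreviation "S \<equiv> (\<lambda>J. min (sum w J) (sum w {..<i} - sum w J)) ` cycle_arcs i"

lemma S_finite: "finite S"
proof -
  have "cycle_arcs i \<subseteq> Pow {..<i}" unfolding cycle_arcs_def using i2 by auto
  then show ?thesis by (meson finite_imageI finite_Pow_iff finite_lessThan finite_subset)
qed

lemma zero_arc: "{0} \<in> cycle_arcs i"
proof -
  have "{0} = {(0 + j) mod i | j. j < (1::nat)}" by auto
  moreover have "(0::nat) < i \<and> 0 < (1::nat) \<and> 1 < i" using i2 by simp
  ultimately show ?thesis unfolding cycle_arcs_def by blast
qed

lemma val_le_best: "val t \<le> best_balance w i"
proof (cases "M t = 0 \<or> M t = i")
  case True
  note zero_arc
  then have "min (sum w {0}) (sum w {..<i} - sum w {0}) \<in> S" by blast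
  then have "min (sum w {0}) (sum w {..<i} - sum w {0}) \<le> best_balance w i"
    unfolding best_balance_def by (rule Max_ge[OF S_finite])
  moreover have "sum w {0} \<ge> 0" using pos[of 0] i2 by simp
  moreover have "sum w {..<i} - sum w {0} \<ge> 0"
  proof -
    have "\<forall>b\<in>{..<i} - {0}. 0 \<le> w b" using pos by (simp add: less_imp_le)
    moreover have "{0} \<subseteq> {..<i}" using i2 by auto
    ultimately have "sum w {0} \<le> sum w {..<i}" using sum_mono2[of "{..<i}" "{0}" w] by blast
    then show ?thesis by simp
  qed
  moreover have "val t \<le> 0" using True unfolding val_def by auto
  ultimately show ?thesis by linarith
next
  case False
  then have m: "0 < M t" "M t < i" using M_le[of t] by auto
  define J where "J = {(R t + j) mod i | j. j < M t}"
  have "J \<in> cycle_arcs i"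
  proof -
    have "J = {(R t mod i + j) mod i | j. j < M t}" unfolding J_def by (rule arc_mod)
    moreover have "R t mod i < i \<and> 0 < M t \<and> M t < i" using m i2 by simp
    ultimately show ?thesis unfolding cycle_arcs_def by blast
  qed
  moreover have "sum w J = F (R t) (E t)" unfolding J_def using arc_sum m by simp
  moreover have "sum w {..<i} - F (R t) (E t) = F (E t) (R t + i)" using compl m by simp
  ultimately have "val t = min (sum w J) (sum w {..<i} - sum w J)" unfolding val_def by simp
  then have "val t \<in> S" using \<open>J \<in> cycle_arcs i\<close> by (simp add: rev_image_eqI)
  then show ?thesis unfolding best_balance_def by (rule Max_ge[OF S_finite])
qed

lemma B_le_best: "B t \<le> best_balance w i"
proof (induction t)
  case 0
  have "val 0 \<le> best_balance w i" by (rule val_le_best)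
  moreover have "val 0 = 0" unfolding val_def using ast_0 F_nonneg[of 0 i] by simp
  ultimately show ?case using ast_0 by simp
next
  case (Suc t) then show ?case using step_B val_le_best by simp
qed

lemma caseA:
  assumes sb: "s < bb" "bb < s + i" and si: "s < i"
  shows "t < k \<Longrightarrow> R t = s \<Longrightarrow> E t \<le> bb \<Longrightarrow> bb - E t \<le> n
     \<Longrightarrow> \<exists>t'<k. min (F s bb) (F bb (s + i)) \<le> val t'"
proof (induction n arbitrary: t)
  case 0
  then have "E t = bb" by simp
  then show ?case using 0 unfolding val_def by auto
next
  case (Suc n)
  show ?case
  proof (cases "E t = bb")
    case True then show ?thesis using Suc.prems unfolding val_def by auto
  next
    case False
    then have lt: "E t < bb" using Suc.prems by simp
    from step_cases[of t] show ?thesis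
    proof
      assume h: "F (R t + M t) (R t + i) < F (R t) (R t + M t) \<and> 0 < M t \<and> R (Suc t) = R t + 1 \<and> M (Suc t) = M t - 1"
      have "F bb (s + i) \<le> F (E t) (s + i)" using F_mono[of "E t" bb "s+i" "s+i"] lt sb by simp
      then have "min (F s bb) (F bb (s + i)) \<le> val t" using h Suc.prems unfolding val_def by auto
      then show ?thesis using Suc.prems by blast
    next
      assume h: "\<not> F (R t + M t) (R t + i) < F (R t) (R t + M t) \<and> M t < i \<and> R (Suc t) = R t \<and> M (Suc t) = M t + 1"
      have "Suc t \<noteq> k" using h Suc.prems k_props si by auto
      then have "Suc t < k" using Suc.prems by simp
      then show ?thesis using Suc.IH[of "Suc t"] h Suc.prems lt by simp
    qed
  qed
qed

lemma key:
  assumes sb: "s < bb" "bb < s + i" and si: "s < i"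
  shows "\<exists>t'<k. min (F s bb) (F bb (s + i)) \<le> val t'"
proof -
  have "s \<le> R k" using k_props si by simp
  then obtain ta where ta: "ta \<le> k" "R ta = s" "\<forall>u<ta. R u < s" using first_R by blast
  have "ta \<noteq> k" using ta k_props si by auto
  then have tak: "ta < k" using ta by simp
  show ?thesis
  proof (cases "E ta \<le> bb")
    case True
    then show ?thesis using caseA[OF sb si tak ta(2) True] by blast
  next
    case False
    then obtain t' where t': "t' < ta" "E t' = bb" "E (Suc t') = Suc bb" using last_E[of bb ta] by auto
    have push: "\<not> F (R t' + M t') (R t' + i) < F (R t') (R t' + M t')"
      using step_cases[of t'] t' by auto
    have "R t' \<le> s" using R_mono[of t' ta] t' ta by simp
    then have "F s bb \<le> F (R t') bb" using F_mono[of "R t'" s bb bb] sb by simp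
    moreover have "val t' = F (R t') bb" using push t' unfolding val_def by simp
    ultimately have "min (F s bb) (F bb (s + i)) \<le> val t'" by simp
    moreover have "t' < k" using t' tak by simp
    ultimately show ?thesis by blast
  qed
qed

lemma best_le_B: "best_balance w i \<le> B k"
proof -
  have "cycle_arcs i \<noteq> {}" using zero_arc by blast
  then have "best_balance w i \<in> S" unfolding best_balance_def using S_finite by (intro Max_in) auto
  then obtain J where J: "J \<in> cycle_arcs i" "best_balance w i = min (sum w J) (sum w {..<i} - sum w J)" by auto
  then obtain s l where sl: "J = {(s + j) mod i | j. j < l}" "s < i" "0 < l" "l < i"
    unfolding cycle_arcs_def by blast
  have "sum w J = F s (s + l)" using sl arc_sum by simp
  moreover have "sum w {..<i} - F s (s + l) = F (s + l) (s + i)" using compl sl by simp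
  ultimately have "best_balance w i = min (F s (s + l)) (F (s + l) (s + i))" using J by simp
  moreover obtain t' where "t' < k" "min (F s (s + l)) (F (s + l) (s + i)) \<le> val t'"
    using key[of s "s + l"] sl by auto
  ultimately show ?thesis using val_le_B by fastforce
qed

end

theorem lemma5:
  fixes w :: "nat \<Rightarrow> real" and i :: nat
  assumes "i \<ge> 2"
    and "\<And>j. j < i \<Longrightarrow> w j > 0"
  shows "\<exists>k. bic_becomes w i k \<and> card {t. t \<le> k \<and> bic_becomes w i t} = 2
            \<and> snd (snd (bic_state w i k)) = best_balance w i"
proof -
  have loc: "bicl w i" using assms by unfold_locales auto
  define kk where "kk = bicl.k w i"
  have e: "snd (snd (bic_state w i kk)) = snd (snd (bicl.ast w i kk))"
    unfolding bicl.bic_rep[OF loc] bicl.rep_def[OF loc] by (simp split: prod.splits)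
  have b1: "bic_becomes w i kk" using bicl.becomes_iff[OF loc, of kk] unfolding kk_def by simp
  have b2: "card {t. t \<le> kk \<and> bic_becomes w i t} = 2" using bicl.card_becomes[OF loc] unfolding kk_def .
  have b3: "snd (snd (bic_state w i kk)) = best_balance w i"
    using e bicl.best_le_B[OF loc] bicl.B_le_best[OF loc, of kk] unfolding kk_def by linarith
  show ?thesis by (rule exI[of _ kk], intro conjI b1 b2 b3)
qed

end
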